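(* Let $R$ be a differential field of characteristic zero, let $\ell_0,r_0\in R$, and define $\ell_{j+1}=\ell_j'+r_j+\ell_0\ell_j$, $r_{j+1}=r_j'+r_0\ell_j$ for $j\ge0$. Suppose there is $p>0$ with $\ell_p\neq0$, $\ell_{p-1}\neq0$ and $$\frac{r_p}{\ell_p}=\frac{r_{p-1}}{\ell_{p-1}}=:\alpha .$$ Let $K$ be a differential field extension of $R$ containing nonzero elements $u,v$ with $u'=\alpha u$, $v'=\ell_0v$, and an element $\beta$ with $\beta'=u^2v$. Then every solution $y\in K$ of $y''=\ell_0y'+r_0y$ is of the form $y=u^{-1}(c_2+c_1\beta)$ for some constants $c_1,c_2$ of $K$.
   Context: Successive differentiation of $y''=\ell_0y'+r_0y$ gives $y^{(j+2)}=\ell_jy'+r_jy$ with $\ell_j,r_j$ defined by the stated recurrence. *)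

theory Defs
  imports Main
begin

text \<open>A derivation on a field: additive and satisfying the Leibniz rule.
  A differential field K is a field type equipped with such a map D.\<close>
definition derivation :: "('a::field \<Rightarrow> 'a) \<Rightarrow> bool" where
  "derivation D \<longleftrightarrow> (\<forall>x y. D (x + y) = D x + D y) \<and> (\<forall>x y. D (x * y) = D x * y + x * D y)"

definition differential_subfield :: "('a::field \<Rightarrow> 'a) \<Rightarrow> 'a set \<Rightarrow> bool" where
  "differential_subfield D R \<longleftrightarrow>
     0 \<in> R \<and> 1 \<in> R \<and>
     (\<forall>x\<in>R. \<forall>y\<in>R. x + y \<in> R \<and> x * y \<in> R) \<and>
     (\<forall>x\<in>R. - x \<in> R \<and> inverse x \<in> R \<and> D x \<in> R)"

fun lr_seq :: "('a::field \<Rightarrow> 'a) \<Rightarrow> 'a \<Rightarrow> 'a \<Rightarrow> nat \<Rightarrow> 'a \<times> 'a" where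
  "lr_seq D l0 r0 0 = (l0, r0)"
| "lr_seq D l0 r0 (Suc j) =
     (let (l, r) = lr_seq D l0 r0 j in (D l + r + l0 * l, D r + r0 * l))"

definition ell :: "('a::field \<Rightarrow> 'a) \<Rightarrow> 'a \<Rightarrow> 'a \<Rightarrow> nat \<Rightarrow> 'a" where
  "ell D l0 r0 j = fst (lr_seq D l0 r0 j)"

definition arr :: "('a::field \<Rightarrow> 'a) \<Rightarrow> 'a \<Rightarrow> 'a \<Rightarrow> nat \<Rightarrow> 'a" where
  "arr D l0 r0 j = snd (lr_seq D l0 r0 j)"

end

theory Submission
  imports Defs
begin

lemma ell_Suc: "ell D l0 r0 (Suc j) = D (ell D l0 r0 j) + arr D l0 r0 j + l0 * ell D l0 r0 j"
  by (simp add: ell_def arr_def split: prod.splits)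

lemma arr_Suc: "arr D l0 r0 (Suc j) = D (arr D l0 r0 j) + r0 * ell D l0 r0 j"
  by (simp add: ell_def arr_def split: prod.splits)

lemma iter_formula:
  assumes d: "derivation D" and y: "D (D y) = l0 * D y + r0 * y"
  shows "(D ^^ (Suc (Suc j))) y = ell D l0 r0 j * D y + arr D l0 r0 j * y"
proof (induction j)
  case 0
  then show ?case using y by (simp add: ell_def arr_def)
next
  case (Suc j)
  have add: "\<And>a b. D (a + b) = D a + D b" and mul: "\<And>a b. D (a * b) = D a * b + a * D b"
    using d unfolding derivation_def by auto
  have "(D ^^ (Suc (Suc (Suc j)))) y = D ((D ^^ (Suc (Suc j))) y)" by simp
  also have "\<dots> = D (ell D l0 r0 j * D y + arr D l0 r0 j * y)" using Suc by simp
  also have "\<dots> = D (ell D l0 r0 j) * D y + ell D l0 r0 j * (l0 * D y + r0 * y)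
       + D (arr D l0 r0 j) * y + arr D l0 r0 j * D y"
    using y by (simp add: add mul)
  also have "\<dots> = ell D l0 r0 (Suc j) * D y + arr D l0 r0 (Suc j) * y"
    by (simp add: ell_Suc arr_Suc algebra_simps)
  finally show ?case .
qed

theorem mainTheorem6:
  fixes D :: "'a::field_char_0 \<Rightarrow> 'a" and R :: "'a set"
    and l0 r0 \<alpha> u v \<beta> :: 'a and p :: nat
  assumes "derivation D"
    and "differential_subfield D R"
    and "l0 \<in> R" and "r0 \<in> R"
    and "p > 0"
    and "ell D l0 r0 p \<noteq> 0" and "ell D l0 r0 (p - 1) \<noteq> 0"
    and "arr D l0 r0 p / ell D l0 r0 p = arr D l0 r0 (p - 1) / ell D l0 r0 (p - 1)"
    and "\<alpha> = arr D l0 r0 p / ell D l0 r0 p"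
    and "u \<noteq> 0" and "v \<noteq> 0"
    and "D u = \<alpha> * u" and "D v = l0 * v" and "D \<beta> = u ^ 2 * v"
  shows "\<forall>y. D (D y) = l0 * D y + r0 * y \<longrightarrow>
           (\<exists>c1 c2. D c1 = 0 \<and> D c2 = 0 \<and> y = inverse u * (c2 + c1 * \<beta>))"
proof (intro allI impI)
  fix y assume y: "D (D y) = l0 * D y + r0 * y"
  have add: "\<And>a b. D (a + b) = D a + D b" and mul: "\<And>a b. D (a * b) = D a * b + a * D b"
    using assms(1) unfolding derivation_def by auto
  obtain q where p: "p = Suc q" using assms(5) by (cases p) auto
  define L where "L = ell D l0 r0 q"
  define A where "A = arr D l0 r0 q"
  have L0: "L \<noteq> 0" using assms(7) p L_def by simp
  have al: "\<alpha> = A / L" using assms(8,9) p L_def A_def by simp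
  have AL: "A = \<alpha> * L" using al L0 by simp
  define w where "w = D y + \<alpha> * y"
  have e1: "(D ^^ (Suc (Suc q))) y = L * w"
    using iter_formula[OF assms(1) y, of q] unfolding L_def[symmetric] A_def[symmetric] w_def AL
    by (simp add: algebra_simps)
  have e2: "(D ^^ (Suc (Suc (Suc q)))) y = ell D l0 r0 p * w"
  proof -
    have "arr D l0 r0 p = \<alpha> * ell D l0 r0 p" using assms(6,9) by simp
    thus ?thesis using iter_formula[OF assms(1) y, of "Suc q"] p
      unfolding w_def by (simp add: algebra_simps)
  qed
  have "(D ^^ (Suc (Suc (Suc q)))) y = D (L * w)" using e1 by simp
  also have "\<dots> = D L * w + L * D w" by (simp add: mul)
  finally have "L * D w = (A + l0 * L) * w"
    using e2 p by (simp add: ell_Suc L_def[symmetric] A_def[symmetric] algebra_simps)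
  hence "L * D w = L * ((\<alpha> + l0) * w)" by (simp add: AL algebra_simps)
  hence Dw: "D w = (\<alpha> + l0) * w" using L0 by simp
  define c1 where "c1 = w / (u * v)"
  have uv: "u * v \<noteq> 0" using assms(10,11) by simp
  have wc: "w = c1 * (u * v)" using uv c1_def by simp
  have Duv: "D (u * v) = (\<alpha> + l0) * (u * v)" using assms(12,13) by (simp add: mul algebra_simps)
  have "D w = D c1 * (u * v) + c1 * D (u * v)" using wc mul by metis
  hence "D c1 * (u * v) = 0" using Dw Duv wc by (simp add: algebra_simps)
  hence Dc1: "D c1 = 0" using uv by simp
  define c2 where "c2 = u * y - c1 * \<beta>"
  have m1: "D (- (c1 * \<beta>)) = - D (c1 * \<beta>)"
    using add[of "c1 * \<beta>" "- (c1 * \<beta>)"] add[of 0 0] by (metis add.commute add_diff_cancel_left' diff_0 diff_add_cancel add.right_neutral)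
  have "D c2 = D (u * y) - D (c1 * \<beta>)" unfolding c2_def
    using add[of "u * y" "- (c1 * \<beta>)"] m1 by simp
  also have "\<dots> = \<alpha> * u * y + u * D y - c1 * u^2 * v"
    using Dc1 assms(12,14) by (simp add: mul)
  also have "\<dots> = u * w - c1 * (u * (u * v))" unfolding w_def by (simp add: algebra_simps power2_eq_square)
  also have "\<dots> = 0" using wc by simp
  finally have Dc2: "D c2 = 0" .
  have "y = inverse u * (c2 + c1 * \<beta>)" using assms(10) by (simp add: c2_def)
  thus "\<exists>c1 c2. D c1 = 0 \<and> D c2 = 0 \<and> y = inverse u * (c2 + c1 * \<beta>)"
    using Dc1 Dc2 by blast
qed

end
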